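(* (a) Let $(x_n)_{n\in\mathbb{N}}$ be a sequence of finite binary trees with $\lim_{n\to\infty}|x_n|=\infty$ that converges in the subtree size topology, i.e. $\lim_{n\to\infty}t(x_n,u)$ exists for every $u\in\mathbb{V}$. Then there is a unique probability measure $\mu$ on $(\mathbb{V}_\infty,\mathcal{B}_\infty)$ such that $\lim_{n\to\infty}t(x_n,u)=\mu(B_u)$ for all $u\in\mathbb{V}$. (b) Let $\mu$ be any probability measure on $(\mathbb{V}_\infty,\mathcal{B}_\infty)$ and let $(X_n)_{n\in\mathbb{N}}$ have distribution $\mathrm{DST}(\mu)$. Then with probability one, $\lim_{n\to\infty}t(X_n,u)=\mu(B_u)$ for all $u\in\mathbb{V}$ (i.e. $X_n$ converges almost surely to $\mu$ in the subtree size topology).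
   Context: $\mathbb{V}=\bigsqcup_{k\ge0}\{0,1\}^k$ is the set of finite $0$-$1$ words (including the empty word $\emptyset$); for words $u=(u_1,\dots,u_k)$, $v=(v_1,\dots,v_l)$, $u+v=(u_1,\dots,u_k,v_1,\dots,v_l)$ denotes concatenation, and $u\prec v$ (prefix order) means $k<l$ and $u_i=v_i$ for $i\le k$. A binary tree is a subset $x\subseteq\mathbb{V}$ that is prefix-stable: $(v_1,\dots,v_k)\in x$ with $k>0$ implies $(v_1,\dots,v_{k-1})\in x$. A finite binary tree is one with finitely many elements (nodes); $|x|$ is its number of nodes. For a finite nonempty binary tree $x$ and $u\in\mathbb{V}$, the subtree size function is $t(x,u)=\frac{1}{|x|}\,|\{v\in\mathbb{V}: u+v\in x\}|$. $\mathbb{V}_\infty=\{0,1\}^{\mathbb{N}}$ with $\sigma$-field $\mathcal{B}_\infty$ generated by coordinate projections, and $B_u=\{v\in\mathbb{V}_\infty: u \text{ is a prefix of } v\}$. The digital search tree distribution $\mathrm{DST}(\mu)$: let $\xi_1,\xi_2,\dots$ be i.i.d. random elements of $\mathbb{V}_\infty$ with distribution $\mu$; set $X_1=\{\emptyset\}$ and, given $X_n$, let $X_{n+1}=X_n\cup\{w\}$ where $w$ is the shortest finite prefix of $\xi_n$ that is not in $X_n$ (i.e. $\xi_n$ is read as a routing instruction, $0$ = go left, $1$ = go right, starting from the root, and the node where the path first exits $X_n$ is added). $\mathrm{DST}(\mu)$ is the distribution of the resulting sequence $(X_n)_{n\in\mathbb{N}}$, where $|X_n|=n$. *)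

theory Defs
  imports "HOL-Probability.Probability"
begin

text \<open>Finite 0-1 words are modelled as \<open>bool list\<close> (False = 0, True = 1);
  concatenation is \<open>@\<close>.  Infinite words are \<open>nat \<Rightarrow> bool\<close>.\<close>

definition binary_tree :: "bool list set \<Rightarrow> bool" where
  "binary_tree x \<longleftrightarrow> (\<forall>v \<in> x. v \<noteq> [] \<longrightarrow> butlast v \<in> x)"

definition subtree_size :: "bool list set \<Rightarrow> bool list \<Rightarrow> real" where
  "subtree_size x u = real (card {v. u @ v \<in> x}) / real (card x)"

definition Vinf :: "(nat \<Rightarrow> bool) measure" where
  "Vinf = Pi\<^sub>M UNIV (\<lambda>_. count_space UNIV)"

definition cyl :: "bool list \<Rightarrow> (nat \<Rightarrow> bool) set" where
  "cyl u = {\<omega>. \<forall>i < length u. \<omega> i = u ! i}"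

definition pref :: "(nat \<Rightarrow> bool) \<Rightarrow> nat \<Rightarrow> bool list" where
  "pref \<omega> m = map \<omega> [0..<m]"

definition exit_node :: "bool list set \<Rightarrow> (nat \<Rightarrow> bool) \<Rightarrow> bool list" where
  "exit_node X \<omega> = pref \<omega> (LEAST m. pref \<omega> m \<notin> X)"

text \<open>\<open>dst \<xi> k\<close> is \<open>X\<^sub>k\<^sub>+\<^sub>1\<close> of the paper (index shifted by one, \<open>\<xi>\<close> indexed from 0).\<close>
fun dst :: "(nat \<Rightarrow> nat \<Rightarrow> bool) \<Rightarrow> nat \<Rightarrow> bool list set" where
  "dst \<xi> 0 = {[]}"
| "dst \<xi> (Suc k) = insert (exit_node (dst \<xi> k) (\<xi> k)) (dst \<xi> k)"

end

theory Submission
  imports Defs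
begin


lemma pref_length[simp]: "length (pref w m) = m" by (simp add: pref_def)

lemma exit_node_ex:
  assumes "finite X" shows "\<exists>m. pref w m \<notin> X"
proof (rule ccontr)
  assume "\<not> ?thesis"
  then have "range (pref w) \<subseteq> X" by auto
  moreover have "inj (pref w)" by (rule injI) (metis pref_length)
  ultimately show False using assms
    by (meson finite_imageD finite_subset infinite_UNIV_nat)
qed

lemma exit_node_notin: "finite X \<Longrightarrow> exit_node X w \<notin> X"
  unfolding exit_node_def using exit_node_ex by (metis (mono_tags, lifting) LeastI_ex)

lemma exit_node_pref: "\<exists>m. exit_node X w = pref w m"
  unfolding exit_node_def by auto

lemma dst_finite[simp]: "finite (dst \<xi> n)"
  by (induction n) auto

lemma dst_card: "card (dst \<xi> n) = Suc n"
  by (induction n) (auto simp: exit_node_notin)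

lemma dst_mono: "m \<le> n \<Longrightarrow> dst \<xi> m \<subseteq> dst \<xi> n"
  by (induction n) (auto simp: le_Suc_eq)

definition ex :: "(nat \<Rightarrow> nat \<Rightarrow> bool) \<Rightarrow> nat \<Rightarrow> bool list" where
  "ex \<xi> k = exit_node (dst \<xi> k) (\<xi> k)"

lemma ex_inj: "inj (ex \<xi>)"
proof (rule injI)
  fix i j assume eq: "ex \<xi> i = ex \<xi> j"
  have *: "ex \<xi> i \<noteq> ex \<xi> j" if "i < j" for i j
  proof -
    have "ex \<xi> i \<in> dst \<xi> (Suc i)" by (simp add: ex_def)
    also have "\<dots> \<subseteq> dst \<xi> j" using that by (intro dst_mono) auto
    finally show ?thesis using exit_node_notin[OF dst_finite] by (auto simp: ex_def)
  qed
  show "i = j" using *[of i j] *[of j i] eq by (cases "i < j"; cases "j < i") auto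
qed

lemma pref_in_cyl: "pref w m = u @ v \<Longrightarrow> w \<in> cyl u"
proof -
  assume h: "pref w m = u @ v"
  have "length u \<le> m" using arg_cong[OF h, of length] by simp
  show "w \<in> cyl u" unfolding cyl_def
  proof (intro CollectI allI impI)
    fix i assume "i < length u"
    then have "pref w m ! i = u ! i" by (simp add: h nth_append)
    then show "w i = u ! i" using \<open>i < length u\<close> \<open>length u \<le> m\<close> by (simp add: pref_def)
  qed
qed

lemma cyl_pref_cases:
  assumes "w \<in> cyl u"
  shows "(\<exists>v. pref w m = u @ v) \<or> (m < length u \<and> pref w m = take m u)"
proof (cases "m < length u")
  case True
  then have "pref w m = take m u" using assms
    by (intro nth_equalityI) (auto simp: cyl_def pref_def)
  then show ?thesis using True by auto
next
  case False
  have "take (length u) (pref w m) = u" using assms False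
    by (intro nth_equalityI) (auto simp: cyl_def pref_def)
  then have "pref w m = u @ drop (length u) (pref w m)" by (metis append_take_drop_id)
  then show ?thesis by blast
qed

lemma card_sub_Suc:
  assumes "finite X" "e \<notin> X"
  shows "card {v. u @ v \<in> insert e X} = card {v. u @ v \<in> X} + (if \<exists>v. e = u @ v then 1 else 0)"
proof -
  have fin: "finite {v. u @ v \<in> X}"
    using assms(1) by (rule finite_vimageI[where h="\<lambda>v. u @ v", unfolded vimage_def]) (auto simp: inj_def)
  show ?thesis
  proof (cases "\<exists>v. e = u @ v")
    case True
    then obtain v where v: "e = u @ v" by blast
    then have "{v. u @ v \<in> insert e X} = insert v {v. u @ v \<in> X}" by auto
    moreover have "v \<notin> {v. u @ v \<in> X}" using v assms by auto
    ultimately show ?thesis using fin True by simp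
  next
    case False
    then have "{v. u @ v \<in> insert e X} = {v. u @ v \<in> X}" by auto
    then show ?thesis using False by simp
  qed
qed

lemma card_sub_dst:
  "real (card {v. u @ v \<in> dst \<xi> n}) = of_bool (u = []) + (\<Sum>k<n. of_bool (\<exists>v. ex \<xi> k = u @ v))"
proof (induction n)
  case 0
  have "{v. u @ v \<in> dst \<xi> 0} = (if u = [] then {[]} else {})" by auto
  then show ?case by simp
next
  case (Suc n)
  show ?case using Suc card_sub_Suc[OF dst_finite exit_node_notin[OF dst_finite], of u \<xi> n "\<xi> n"]
    by (simp add: ex_def)
qed

lemma sub_le: "of_bool (\<exists>v. ex \<xi> k = u @ v) \<le> (indicator (cyl u) (\<xi> k) :: real)"
  using exit_node_pref[of "dst \<xi> k" "\<xi> k"] pref_in_cyl by (auto simp: ex_def indicator_def) (metis pref_in_cyl)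

lemma sub_ge: "(\<Sum>k<n. (indicator (cyl u) (\<xi> k) :: real)) \<le> (\<Sum>k<n. (of_bool (\<exists>v. ex \<xi> k = u @ v) :: real)) + real (length u)"
proof -
  define A where "A = {k. k < n \<and> \<xi> k \<in> cyl u \<and> \<not> (\<exists>v. ex \<xi> k = u @ v)}"
  have "(\<Sum>k<n. (indicator (cyl u) (\<xi> k) :: real)) \<le> (\<Sum>k<n. of_bool (\<exists>v. ex \<xi> k = u @ v) + of_bool (k \<in> A))"
    by (intro sum_mono) (auto simp: A_def indicator_def)
  also have "\<dots> = (\<Sum>k<n. of_bool (\<exists>v. ex \<xi> k = u @ v)) + (\<Sum>k<n. of_bool (k \<in> A))"
    by (simp add: sum.distrib)
  also have "(\<Sum>k<n. (of_bool (k \<in> A)::real)) = card A"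
  proof -
    have "A \<subseteq> {..<n}" by (auto simp: A_def)
    then have "(\<Sum>k<n. (of_bool (k \<in> A)::real)) = (\<Sum>k\<in>A. 1)"
      by (simp add: sum.If_cases Int_absorb1 of_bool_def)
    then show ?thesis by simp
  qed
  also have "card A \<le> length u"
  proof -
    have "ex \<xi> ` A \<subseteq> (\<lambda>m. take m u) ` {..<length u}"
    proof
      fix e assume "e \<in> ex \<xi> ` A"
      then obtain k where k: "k \<in> A" "e = ex \<xi> k" by auto
      obtain m where m: "ex \<xi> k = pref (\<xi> k) m" using exit_node_pref by (auto simp: ex_def)
      from k have "\<xi> k \<in> cyl u" "\<not> (\<exists>v. ex \<xi> k = u @ v)" by (auto simp: A_def)
      with cyl_pref_cases[of "\<xi> k" u m] m have "m < length u \<and> e = take m u" using k by auto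
      then show "e \<in> (\<lambda>m. take m u) ` {..<length u}" by auto
    qed
    then have "card (ex \<xi> ` A) \<le> card ((\<lambda>m. take m u) ` {..<length u})" by (intro card_mono) auto
    also have "\<dots> \<le> length u" using card_image_le[of "{..<length u}" "\<lambda>m. take m u"] by simp
    finally show ?thesis using card_image[OF inj_on_subset[OF ex_inj subset_UNIV]] by simp
  qed
  finally show ?thesis by simp
qed



lemma slln_bounded:
  fixes Z :: "nat \<Rightarrow> 'a \<Rightarrow> real"
  assumes P: "prob_space M"
    and ind: "prob_space.indep_vars M (\<lambda>_. borel) Z UNIV"
    and dist: "\<And>i. distr M borel (Z i) = distr M borel (Z 0)"
    and bnd: "\<And>i x. Z i x \<in> {0..1}"
  shows "AE x in M. (\<lambda>n. (\<Sum>i<n. Z i x) / n) \<longlonglongrightarrow> prob_space.expectation M (Z 0)"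
proof -
  interpret prob_space M by fact
  define p where "p = expectation (Z 0)"
  have rv: "random_variable borel (Z i)" for i using ind unfolding indep_vars_def by blast
  define A where "A = (\<lambda>(e::real) n. {x\<in>space M. \<bar>(\<Sum>i<n. Z i x) / n - p\<bar> \<ge> e})"
  have Ameas: "A e n \<in> sets M" for e n unfolding A_def using rv by measurable
  have Abound: "prob (A e n) \<le> 2 * exp (-2 * e\<^sup>2) ^ n" if e: "e > 0" for e n
  proof (cases "n = 0")
    case True
    have "prob (A e n) \<le> 1" by (rule prob_le_1)
    moreover have "2 * exp (-2 * e\<^sup>2) ^ n = (2::real)" using True by simp
    ultimately show ?thesis by linarith
  next
    case False
    interpret H: Hoeffding_ineq_iid M "{..<n}" Z "Z 0" 0 1 "expectation (Z 0)"
    proof unfold_locales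
      show "finite {..<n}" by simp
      show "indep_vars (\<lambda>_. borel) Z {..<n}" by (rule indep_vars_subset[OF ind]) auto
      show "distr M borel (Z i) = distr M borel (Z 0)" if "i \<in> {..<n}" for i by (rule dist)
      show "random_variable borel (Z 0)" by (rule rv)
      show "AE x in M. Z 0 x \<in> {0..1}" using bnd by simp
    qed
    have ne: "{..<n} \<noteq> {}" using False by auto
    have "prob (A e n) \<le> 2 * exp (-2 * real n * e\<^sup>2 / (1 - 0)\<^sup>2)"
      using H.Hoeffding_ineq_abs_ge'[OF less_imp_le[OF e] zero_less_one ne]
      unfolding A_def p_def card_lessThan .
    also have "exp (-2 * real n * e\<^sup>2 / (1 - 0)\<^sup>2) = exp (-2 * e\<^sup>2) ^ n"
      by (simp add: exp_of_nat_mult[symmetric] mult_ac)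
    finally show ?thesis .
  qed
  have ev: "AE x in M. eventually (\<lambda>n. \<bar>(\<Sum>i<n. Z i x) / n - p\<bar> < e) sequentially" if e: "e > 0" for e
  proof -
    have "summable (\<lambda>n. measure M (A e n))"
    proof (rule summable_comparison_test)
      show "\<exists>N. \<forall>n\<ge>N. norm (measure M (A e n)) \<le> 2 * exp (-2 * e\<^sup>2) ^ n"
        using Abound[OF e] by auto
      show "summable (\<lambda>n. 2 * exp (-2 * e\<^sup>2) ^ n)"
        using e by (intro summable_mult summable_geometric) auto
    qed
    from borel_cantelli_AE1[OF Ameas _ this]
    have "AE x in M. eventually (\<lambda>n. x \<in> space M - A e n) sequentially" by (simp add: emeasure_eq_measure)
    then show ?thesis by (rule eventually_mono) (auto simp: A_def elim!: eventually_mono)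
  qed
  have "AE x in M. \<forall>m::nat. eventually (\<lambda>n. \<bar>(\<Sum>i<n. Z i x) / n - p\<bar> < 1 / Suc m) sequentially"
    unfolding AE_all_countable using ev by auto
  then show ?thesis
  proof (rule eventually_mono)
    fix x assume h: "\<forall>m::nat. eventually (\<lambda>n. \<bar>(\<Sum>i<n. Z i x) / n - p\<bar> < 1 / Suc m) sequentially"
    show "(\<lambda>n. (\<Sum>i<n. Z i x) / n) \<longlonglongrightarrow> expectation (Z 0)"
      unfolding p_def[symmetric] LIMSEQ_iff
    proof (intro allI impI)
      fix r :: real assume "0 < r"
      then obtain m :: nat where m: "1 / Suc m < r"
        by (metis nat_approx_posE)
      from h[rule_format, of m] obtain N where "\<forall>n\<ge>N. \<bar>(\<Sum>i<n. Z i x) / n - p\<bar> < 1 / Suc m"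
        by (auto simp: eventually_sequentially)
      then show "\<exists>N. \<forall>n\<ge>N. norm ((\<Sum>i<n. Z i x) / n - p) < r" using m by force
    qed
  qed
qed

lemma cyl_sets[measurable]: "cyl u \<in> sets Vinf"
proof -
  have "cyl u = {\<omega>\<in>space Vinf. \<forall>i\<in>{..<length u}. \<omega> i = u ! i}"
    by (auto simp: cyl_def Vinf_def space_PiM)
  also have "\<dots> \<in> sets Vinf" unfolding Vinf_def by measurable
  finally show ?thesis .
qed



lemma conv_aux:
  fixes S C :: "nat \<Rightarrow> real"
  assumes S: "(\<lambda>n. S n / n) \<longlonglongrightarrow> p" and K: "\<And>n. \<bar>C n - S n\<bar> \<le> K"
  shows "(\<lambda>n. C n / Suc n) \<longlonglongrightarrow> p"
proof -
  have eq: "\<forall>\<^sub>F n in sequentially. (C n - S n) / Suc n + (S n / n) * (n / Suc n) = C n / Suc n"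
    using eventually_gt_at_top[of "0::nat"]
  proof eventually_elim
    case (elim n)
    then have "(S n / n) * (n / Suc n) = S n / Suc n" by simp
    then show ?case by (simp add: diff_divide_distrib)
  qed
  have 1: "(\<lambda>n. (C n - S n) / Suc n) \<longlonglongrightarrow> 0"
  proof (rule Lim_null_comparison)
    show "\<forall>\<^sub>F n in sequentially. norm ((C n - S n) / Suc n) \<le> K * (1 / Suc n)"
      using K by (auto simp: abs_divide divide_right_mono)
    show "(\<lambda>n. K * (1 / real (Suc n))) \<longlonglongrightarrow> 0"
      using tendsto_mult[OF tendsto_const[of K] LIMSEQ_Suc[OF lim_const_over_n[of 1]]] by simp
  qed
  have 2: "(\<lambda>n. (S n / n) * (n / Suc n)) \<longlonglongrightarrow> p * 1"
    by (intro tendsto_mult S LIMSEQ_n_over_Suc_n)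
  show ?thesis using Lim_transform_eventually[OF tendsto_add[OF 1 2] eq] by simp
qed

lemma partb:
  fixes \<mu> :: "(nat \<Rightarrow> bool) measure" and M :: "'a measure" and \<xi> :: "nat \<Rightarrow> 'a \<Rightarrow> nat \<Rightarrow> bool"
  assumes "prob_space \<mu>" "sets \<mu> = sets Vinf" "prob_space M"
    and ind: "prob_space.indep_vars M (\<lambda>_. Vinf) \<xi> UNIV"
    and dist: "\<forall>i. distr M Vinf (\<xi> i) = \<mu>"
  shows "AE \<omega> in M. \<forall>u. (\<lambda>n. subtree_size (dst (\<lambda>i. \<xi> i \<omega>) n) u) \<longlonglongrightarrow> measure \<mu> (cyl u)"
proof -
  interpret prob_space M by fact
  interpret mu: prob_space \<mu> by fact
  have meas[measurable]: "\<xi> i \<in> measurable M Vinf" for i using ind unfolding indep_vars_def by blast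
  show ?thesis unfolding AE_all_countable
  proof
    fix u :: "bool list"
    define Z where "Z = (\<lambda>i \<omega>. indicator (cyl u) (\<xi> i \<omega>) :: real)"
    have im: "indicator (cyl u) \<in> borel_measurable Vinf" by measurable
    have indZ: "indep_vars (\<lambda>_. borel) Z UNIV"
      unfolding Z_def by (rule indep_vars_compose2[OF ind]) (rule im)
    have dZ: "distr M borel (Z i) = distr \<mu> borel (indicator (cyl u))" for i
    proof -
      have "distr M borel (Z i) = distr (distr M Vinf (\<xi> i)) borel (indicator (cyl u))"
        by (subst distr_distr[OF im meas]) (simp add: Z_def comp_def)
      then show ?thesis using dist by simp
    qed
    have EZ: "expectation (Z 0) = measure \<mu> (cyl u)"
    proof -
      have "expectation (Z 0) = integral\<^sup>L (distr M Vinf (\<xi> 0)) (indicator (cyl u))"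
        unfolding Z_def by (rule integral_distr[symmetric]) (auto intro: meas im)
      also have "\<dots> = integral\<^sup>L \<mu> (indicator (cyl u) :: _ \<Rightarrow> real)" using dist by simp
      also have "\<dots> = measure \<mu> (cyl u)"
        using sets_eq_imp_space_eq[OF assms(2)] by (simp add: Vinf_def space_PiM)
      finally show ?thesis .
    qed
    have "AE \<omega> in M. (\<lambda>n. (\<Sum>i<n. Z i \<omega>) / n) \<longlonglongrightarrow> expectation (Z 0)"
    proof (rule slln_bounded[OF \<open>prob_space M\<close> indZ])
      show "distr M borel (Z i) = distr M borel (Z 0)" for i by (simp only: dZ)
      show "Z i x \<in> {0..1}" for i x by (simp add: Z_def)
    qed
    then show "AE \<omega> in M. (\<lambda>n. subtree_size (dst (\<lambda>i. \<xi> i \<omega>) n) u) \<longlonglongrightarrow> measure \<mu> (cyl u)"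
    proof (rule eventually_mono)
      fix \<omega> assume h: "(\<lambda>n. (\<Sum>i<n. Z i \<omega>) / n) \<longlonglongrightarrow> expectation (Z 0)"
      define x where "x = (\<lambda>i. \<xi> i \<omega>)"
      have "(\<lambda>n. real (card {v. u @ v \<in> dst x n}) / Suc n) \<longlonglongrightarrow> measure \<mu> (cyl u)"
      proof (rule conv_aux[where S = "\<lambda>n. \<Sum>i<n. Z i \<omega>" and K = "length u + 1"])
        show "(\<lambda>n. (\<Sum>i<n. Z i \<omega>) / real n) \<longlonglongrightarrow> measure \<mu> (cyl u)" using h EZ by simp
        fix n
        have S: "(\<Sum>i<n. Z i \<omega>) = (\<Sum>k<n. (indicator (cyl u) (x k) :: real))" by (simp add: Z_def x_def)
        have a: "(\<Sum>k<n. of_bool (\<exists>v. ex x k = u @ v)) \<le> (\<Sum>k<n. (indicator (cyl u) (x k) :: real))"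
          by (intro sum_mono sub_le)
        have b: "of_bool (u = []) \<le> (1::real)" by simp
        have c: "0 \<le> (of_bool (u = []) :: real)" by simp
        show "\<bar>real (card {v. u @ v \<in> dst x n}) - (\<Sum>i<n. Z i \<omega>)\<bar> \<le> real (length u + 1)"
          unfolding card_sub_dst S abs_le_iff of_nat_add of_nat_1
          using a b sub_ge[where \<xi>=x and u=u and n=n] c by linarith
      qed
      then show "(\<lambda>n. subtree_size (dst (\<lambda>i. \<xi> i \<omega>) n) u) \<longlonglongrightarrow> measure \<mu> (cyl u)"
        by (simp add: subtree_size_def dst_card x_def)
    qed
  qed
qed



lemma cyl_iff: "\<omega> \<in> cyl u \<longleftrightarrow> pref \<omega> (length u) = u"
proof
  assume "\<omega> \<in> cyl u" then show "pref \<omega> (length u) = u"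
    by (intro nth_equalityI) (auto simp: cyl_def pref_def)
next
  assume h: "pref \<omega> (length u) = u"
  show "\<omega> \<in> cyl u" unfolding cyl_def
  proof (intro CollectI allI impI)
    fix i assume "i < length u"
    then show "\<omega> i = u ! i" using arg_cong[OF h, of "\<lambda>l. l ! i"] by (simp add: pref_def)
  qed
qed

lemma take_pref: "m \<le> n \<Longrightarrow> take m (pref \<omega> n) = pref \<omega> m"
  by (simp add: pref_def take_map)

lemma cyl_Nil[simp]: "cyl [] = UNIV" by (simp add: cyl_def)

lemma space_Vinf[simp]: "space Vinf = UNIV" by (simp add: Vinf_def space_PiM)

definition lft :: "(bool list \<Rightarrow> real) \<Rightarrow> bool list \<Rightarrow> real" where
  "lft \<phi> u = (\<Sum>i<length u. if u ! i then \<phi> (take i u @ [False]) else 0)"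

fun path :: "(bool list \<Rightarrow> real) \<Rightarrow> real \<Rightarrow> nat \<Rightarrow> bool list" where
  "path \<phi> U 0 = []"
| "path \<phi> U (Suc n) = path \<phi> U n @ [lft \<phi> (path \<phi> U n) + \<phi> (path \<phi> U n @ [False]) \<le> U]"

lemma lft_Nil[simp]: "lft \<phi> [] = 0" by (simp add: lft_def)

lemma lft_snoc: "lft \<phi> (u @ [b]) = lft \<phi> u + (if b then \<phi> (u @ [False]) else 0)"
proof -
  have "lft \<phi> (u @ [b]) = (\<Sum>i<length u. if (u @ [b]) ! i then \<phi> (take i (u @ [b]) @ [False]) else 0)
      + (if b then \<phi> (u @ [False]) else 0)"
    by (simp add: lft_def)
  also have "(\<Sum>i<length u. if (u @ [b]) ! i then \<phi> (take i (u @ [b]) @ [False]) else 0) = lft \<phi> u"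
    unfolding lft_def by (intro sum.cong) (auto simp: nth_append)
  finally show ?thesis .
qed

lemma path_length[simp]: "length (path \<phi> U n) = n"
  by (induction n) auto

lemma take_path: "m \<le> n \<Longrightarrow> take m (path \<phi> U n) = path \<phi> U m"
proof (induction n)
  case 0 then show ?case by simp
next
  case (Suc n)
  show ?case
  proof (cases "m = Suc n")
    case True then show ?thesis by simp
  next
    case False
    then have "m \<le> n" using Suc by simp
    then show ?thesis using Suc by simp
  qed
qed

locale phi_fun =
  fixes \<phi> :: "bool list \<Rightarrow> real"
  assumes phi_Nil: "\<phi> [] = 1" and phi_nn: "\<And>u. \<phi> u \<ge> 0"
    and phi_add: "\<And>u. \<phi> u = \<phi> (u @ [False]) + \<phi> (u @ [True])"
begin

lemma lft_bounds: "0 \<le> lft \<phi> u \<and> lft \<phi> u + \<phi> u \<le> 1"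
proof (induction u rule: rev_induct)
  case Nil then show ?case by (simp add: phi_Nil)
next
  case (snoc b u)
  then show ?case using phi_add[of u] phi_nn[of "u @ [False]"] phi_nn[of "u @ [True]"]
    by (cases b) (auto simp: lft_snoc)
qed

lemma path_iff:
  assumes "length u = n" and U: "0 \<le> U" "U < 1"
  shows "path \<phi> U n = u \<longleftrightarrow> (lft \<phi> u \<le> U \<and> U < lft \<phi> u + \<phi> u)"
  using assms
proof (induction n arbitrary: u)
  case 0
  then show ?case using U by (simp add: phi_Nil)
next
  case (Suc n)
  then obtain w b where u: "u = w @ [b]" and w: "length w = n"
    by (metis length_Suc_conv_rev)
  have "path \<phi> U (Suc n) = u \<longleftrightarrow> path \<phi> U n = w \<and> b = (lft \<phi> w + \<phi> (w @ [False]) \<le> U)"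
    using w u by auto
  also have "\<dots> \<longleftrightarrow> (lft \<phi> w \<le> U \<and> U < lft \<phi> w + \<phi> w) \<and> b = (lft \<phi> w + \<phi> (w @ [False]) \<le> U)"
    using Suc.IH[OF w U] by simp
  also have "\<dots> \<longleftrightarrow> (lft \<phi> u \<le> U \<and> U < lft \<phi> u + \<phi> u)"
    using phi_add[of w] phi_nn[of "w @ [False]"] phi_nn[of "w @ [True]"]
    by (cases b) (auto simp: u lft_snoc)
  finally show ?case .
qed

end



definition Fm :: "(bool list \<Rightarrow> real) \<Rightarrow> real \<Rightarrow> nat \<Rightarrow> bool" where
  "Fm \<phi> U = (\<lambda>i. path \<phi> U (Suc i) ! i)"

lemma pref_Fm: "pref (Fm \<phi> U) n = path \<phi> U n"
proof (intro nth_equalityI)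
  fix i assume "i < length (pref (Fm \<phi> U) n)"
  then have i: "i < n" by simp
  have "path \<phi> U (Suc i) ! i = take (Suc i) (path \<phi> U n) ! i"
    using i by (subst take_path) auto
  also have "\<dots> = path \<phi> U n ! i" by simp
  finally show "pref (Fm \<phi> U) n ! i = path \<phi> U n ! i" using i by (simp add: pref_def Fm_def)
qed simp

lemma path_meas: "(\<lambda>U. path \<phi> U n) \<in> measurable borel (count_space UNIV)"
proof (induction n)
  case 0 then show ?case by simp
next
  case (Suc n)
  have "(\<lambda>U. (\<lambda>w U. w @ [lft \<phi> w + \<phi> (w @ [False]) \<le> U]) (path \<phi> U n) U) \<in> measurable borel (count_space UNIV)"
  proof (rule measurable_compose_countable[OF _ Suc])
    fix w :: "bool list"
    have "(\<lambda>U::real. lft \<phi> w + \<phi> (w @ [False]) \<le> U) \<in> measurable borel (count_space UNIV)" by measurable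
    then show "(\<lambda>U. w @ [lft \<phi> w + \<phi> (w @ [False]) \<le> U]) \<in> measurable borel (count_space UNIV)"
      by (rule measurable_compose[where f="\<lambda>U. lft \<phi> w + \<phi> (w @ [False]) \<le> U" and g="\<lambda>b. w @ [b]"]) simp
  qed
  then show ?case by simp
qed

lemma Fm_meas: "Fm \<phi> \<in> measurable borel Vinf"
  unfolding Vinf_def Fm_def
proof (rule measurable_PiM_single')
  fix i :: nat
  show "(\<lambda>U. path \<phi> U (Suc i) ! i) \<in> measurable borel (count_space UNIV)"
    by (rule measurable_compose[OF path_meas]) simp
qed simp

context phi_fun begin

lemma exists_measure: "\<exists>\<nu>. prob_space \<nu> \<and> sets \<nu> = sets Vinf \<and> (\<forall>u. measure \<nu> (cyl u) = \<phi> u)"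
proof -
  define Unif where "Unif = uniform_measure lborel {0..<1::real}"
  have e1: "emeasure lborel {0..<1::real} = 1" by simp
  have P: "prob_space Unif" unfolding Unif_def by (rule prob_space_uniform_measure) (simp_all add: e1)
  have meas: "Fm \<phi> \<in> measurable Unif Vinf"
  proof -
    have "measurable Unif Vinf = measurable borel Vinf"
      by (rule measurable_cong_sets) (simp_all add: Unif_def)
    then show ?thesis using Fm_meas by simp
  qed
  define \<nu> where "\<nu> = distr Unif Vinf (Fm \<phi>)"
  have "prob_space \<nu>" unfolding \<nu>_def by (rule prob_space.prob_space_distr[OF P meas])
  moreover have "sets \<nu> = sets Vinf" by (simp add: \<nu>_def)
  moreover have "measure \<nu> (cyl u) = \<phi> u" for u
  proof -
    have "measure \<nu> (cyl u) = measure Unif (Fm \<phi> -` cyl u \<inter> space Unif)"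
      unfolding \<nu>_def by (rule measure_distr[OF meas cyl_sets])
    also have "\<dots> = measure lborel ({0..<1} \<inter> (Fm \<phi> -` cyl u)) / measure lborel {0..<1::real}"
      unfolding Unif_def by (subst measure_uniform_measure) (auto simp: e1 intro!: measurable_sets_borel[OF Fm_meas cyl_sets, simplified])
    also have "{0..<1} \<inter> (Fm \<phi> -` cyl u) = {lft \<phi> u..<lft \<phi> u + \<phi> u}"
    proof -
      have "U \<in> {0..<1} \<inter> (Fm \<phi> -` cyl u) \<longleftrightarrow> U \<in> {lft \<phi> u..<lft \<phi> u + \<phi> u}" for U
      proof (cases "0 \<le> U \<and> U < 1")
        case True
        then show ?thesis using path_iff[of u "length u" U] by (simp add: cyl_iff pref_Fm)
      next
        case False
        then show ?thesis using lft_bounds[of u] by auto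
      qed
      then show ?thesis by blast
    qed
    also have "measure lborel {lft \<phi> u..<lft \<phi> u + \<phi> u} = \<phi> u"
      using phi_nn[of u] by (simp add: measure_def)
    finally show ?thesis by (simp add: measure_def)
  qed
  ultimately show ?thesis by blast
qed

end



lemma cyl_Int_cases:
  assumes "length u \<le> length v"
  shows "cyl u \<inter> cyl v = cyl v \<or> cyl u \<inter> cyl v = {}"
proof (cases "take (length u) v = u")
  case True
  have "cyl v \<subseteq> cyl u"
  proof
    fix \<omega> assume "\<omega> \<in> cyl v"
    then have "pref \<omega> (length v) = v" by (simp add: cyl_iff)
    then have "pref \<omega> (length u) = u" using take_pref[OF assms, of \<omega>] True by simp
    then show "\<omega> \<in> cyl u" by (simp add: cyl_iff)
  qed
  then show ?thesis by blast
next
  case False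
  have "cyl u \<inter> cyl v = {}"
  proof (rule ccontr)
    assume "cyl u \<inter> cyl v \<noteq> {}"
    then obtain \<omega> where "pref \<omega> (length u) = u" "pref \<omega> (length v) = v" by (auto simp: cyl_iff)
    then show False using take_pref[OF assms, of \<omega>] False by simp
  qed
  then show ?thesis by blast
qed

lemma sets_Vinf_cyl: "sets Vinf = sigma_sets UNIV (insert {} (range cyl))"
proof
  show "sigma_sets UNIV (insert {} (range cyl)) \<subseteq> sets Vinf"
  proof -
    have "insert {} (range cyl) \<subseteq> sets Vinf" using cyl_sets by blast
    then show ?thesis using sets.sigma_sets_subset[of "insert {} (range cyl)" Vinf] by simp
  qed
next
  interpret S: sigma_algebra UNIV "sigma_sets UNIV (insert {} (range cyl))"
    by (rule sigma_algebra_sigma_sets) auto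
  have "sets Vinf = sigma_sets UNIV {{f \<in> UNIV. f i \<in> A} |i A. i \<in> UNIV \<and> A \<in> sets (count_space (UNIV::bool set))}"
    unfolding Vinf_def sets_PiM_single by simp
  also have "\<dots> \<subseteq> sigma_sets UNIV (insert {} (range cyl))"
  proof (rule S.sigma_sets_subset, safe)
    fix i :: nat and A :: "bool set"
    define I where "I = {w. length w = Suc i \<and> w ! i \<in> A}"
    have "{f \<in> UNIV. f i \<in> A} = (\<Union>w\<in>I. cyl w)"
    proof safe
      fix f :: "nat \<Rightarrow> bool" assume "f i \<in> A"
      then have "pref f (Suc i) \<in> I" "f \<in> cyl (pref f (Suc i))"
        by (auto simp: I_def cyl_iff pref_def nth_append)
      then show "f \<in> (\<Union>w\<in>I. cyl w)" by blast
    next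
      fix f w assume "w \<in> I" "f \<in> cyl w"
      then show "f i \<in> A" by (auto simp: I_def cyl_def)
    qed simp
    also have "\<dots> \<in> sigma_sets UNIV (insert {} (range cyl))"
      by (rule S.countable_UN'') (auto intro: countable_subset[OF subset_UNIV])
    finally show "{f \<in> UNIV. f i \<in> A} \<in> sigma_sets UNIV (insert {} (range cyl))" .
  qed
  finally show "sets Vinf \<subseteq> sigma_sets UNIV (insert {} (range cyl))" .
qed

lemma unique_measure:
  assumes "prob_space \<nu>1" "prob_space \<nu>2" "sets \<nu>1 = sets Vinf" "sets \<nu>2 = sets Vinf"
    and eq: "\<And>u. measure \<nu>1 (cyl u) = measure \<nu>2 (cyl u)"
  shows "\<nu>1 = \<nu>2"
proof -
  interpret p1: prob_space \<nu>1 by fact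
  interpret p2: prob_space \<nu>2 by fact
  show ?thesis
proof (rule measure_eqI_generator_eq[where E = "insert {} (range cyl)" and \<Omega> = UNIV and A = "\<lambda>_. UNIV"])
  show "Int_stable (insert {} (range cyl))"
  proof (rule Int_stableI)
    fix a b assume "a \<in> insert {} (range cyl)" "b \<in> insert {} (range cyl)"
    then show "a \<inter> b \<in> insert {} (range cyl)"
    proof (elim insertE rangeE)
      fix u v assume ab: "a = cyl u" "b = cyl v"
      show ?thesis
      proof (cases "length u \<le> length v")
        case True then show ?thesis using cyl_Int_cases[OF True] ab by auto
      next
        case False then show ?thesis using cyl_Int_cases[of v u] ab by (auto simp: Int_commute)
      qed
    qed auto
  qed
  show "insert {} (range cyl) \<subseteq> Pow UNIV" by simp
  show "emeasure \<nu>1 X = emeasure \<nu>2 X" if "X \<in> insert {} (range cyl)" for X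
    using that eq by (auto simp: p1.emeasure_eq_measure p2.emeasure_eq_measure)
  show "sets \<nu>1 = sigma_sets UNIV (insert {} (range cyl))" using assms(3) sets_Vinf_cyl by simp
  show "sets \<nu>2 = sigma_sets UNIV (insert {} (range cyl))" using assms(4) sets_Vinf_cyl by simp
  show "range (\<lambda>_. UNIV) \<subseteq> insert {} (range cyl)" using cyl_Nil by blast
  show "(\<Union>i::nat. UNIV) = UNIV" by simp
  show "emeasure \<nu>1 UNIV \<noteq> \<infinity>" for i :: nat by (simp add: p1.emeasure_eq_measure)
qed
qed



lemma sub_split:
  assumes "finite x"
  shows "real (card {v. u @ v \<in> x}) = of_bool (u \<in> x) + real (card {v. (u @ [False]) @ v \<in> x})
           + real (card {v. (u @ [True]) @ v \<in> x})"
proof -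
  have fin: "finite {v. w @ v \<in> x}" for w
    using assms by (rule finite_vimageI[where h="\<lambda>v. w @ v", unfolded vimage_def]) (auto simp: inj_def)
  have fin': "finite {v. u @ b # v \<in> x}" for b using fin[of "u @ [b]"] by simp
  have eq: "{v. u @ v \<in> x} = {v::bool list. v = [] \<and> u \<in> x} \<union> (Cons False ` {v. (u @ [False]) @ v \<in> x} \<union> Cons True ` {v. (u @ [True]) @ v \<in> x})"
  proof (intro set_eqI iffI)
    fix v assume "v \<in> {v. u @ v \<in> x}"
    then show "v \<in> {v::bool list. v = [] \<and> u \<in> x} \<union> (Cons False ` {v. (u @ [False]) @ v \<in> x} \<union> Cons True ` {v. (u @ [True]) @ v \<in> x})"
    proof (cases v)
      case (Cons a list)
      then show ?thesis using \<open>v \<in> {v. u @ v \<in> x}\<close> by (cases a) auto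
    qed auto
  qed auto
  have c0: "card {v::bool list. v = [] \<and> u \<in> x} = of_bool (u \<in> x)" by (cases "u \<in> x") auto
  have "card {v. u @ v \<in> x} = card {v::bool list. v = [] \<and> u \<in> x} + card (Cons False ` {v. (u @ [False]) @ v \<in> x} \<union> Cons True ` {v. (u @ [True]) @ v \<in> x})"
    unfolding eq by (intro card_Un_disjoint) (auto intro: fin fin')
  also have "card (Cons False ` {v. (u @ [False]) @ v \<in> x} \<union> Cons True ` {v. (u @ [True]) @ v \<in> x})
     = card (Cons False ` {v. (u @ [False]) @ v \<in> x}) + card (Cons True ` {v. (u @ [True]) @ v \<in> x})"
    by (rule card_Un_disjoint) (auto intro: fin fin')
  also have "card (Cons False ` {v. (u @ [False]) @ v \<in> x}) = card {v. (u @ [False]) @ v \<in> x}"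
    by (rule card_image) (auto simp: inj_on_def)
  also have "card (Cons True ` {v. (u @ [True]) @ v \<in> x}) = card {v. (u @ [True]) @ v \<in> x}"
    by (rule card_image) (auto simp: inj_on_def)
  finally show ?thesis using c0 by simp
qed

lemma parta:
  fixes x :: "nat \<Rightarrow> bool list set"
  assumes h1: "\<forall>n. binary_tree (x n) \<and> finite (x n) \<and> x n \<noteq> {}"
    and h2: "filterlim (\<lambda>n. card (x n)) at_top sequentially"
    and h3: "\<forall>u. convergent (\<lambda>n. subtree_size (x n) u)"
  shows "\<exists>!\<mu>. prob_space \<mu> \<and> sets \<mu> = sets Vinf \<and>
                  (\<forall>u. (\<lambda>n. subtree_size (x n) u) \<longlonglongrightarrow> measure \<mu> (cyl u))"
proof -
  define \<phi> where "\<phi> u = lim (\<lambda>n. subtree_size (x n) u)" for u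
  have L: "(\<lambda>n. subtree_size (x n) u) \<longlonglongrightarrow> \<phi> u" for u
    using h3 unfolding \<phi>_def by (simp add: convergent_LIMSEQ_iff)
  have cpos: "card (x n) > 0" for n using h1 by (simp add: card_gt_0_iff)
  have inv0: "(\<lambda>n. 1 / real (card (x n))) \<longlonglongrightarrow> 0"
    using filterlim_compose[OF lim_const_over_n[of 1] h2] by simp
  interpret phi_fun \<phi>
  proof
    have "subtree_size (x n) [] = 1" for n using cpos[of n] by (simp add: subtree_size_def)
    then have "(\<lambda>n. subtree_size (x n) []) \<longlonglongrightarrow> 1" by simp
    then show "\<phi> [] = 1" using L[of "[]"] LIMSEQ_unique by blast
  next
    fix u
    have "0 \<le> subtree_size (x n) u" for n by (simp add: subtree_size_def)
    then show "0 \<le> \<phi> u" using L[of u] by (intro LIMSEQ_le_const[of _ _ 0]) auto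
  next
    fix u
    have eq: "subtree_size (x n) u = of_bool (u \<in> x n) / real (card (x n)) + subtree_size (x n) (u @ [False]) + subtree_size (x n) (u @ [True])" for n
      unfolding subtree_size_def sub_split[of "x n" u, OF h1[rule_format, THEN conjunct2, THEN conjunct1]]
      by (simp add: add_divide_distrib)
    have z: "(\<lambda>n. of_bool (u \<in> x n) / real (card (x n))) \<longlonglongrightarrow> 0"
    proof (rule Lim_null_comparison[OF _ inv0])
      show "\<forall>\<^sub>F n in sequentially. norm (of_bool (u \<in> x n) / real (card (x n))) \<le> 1 / real (card (x n))"
        by (intro always_eventually allI) (auto simp: divide_right_mono)
    qed
    have "(\<lambda>n. subtree_size (x n) u) \<longlonglongrightarrow> 0 + \<phi> (u @ [False]) + \<phi> (u @ [True])"
      unfolding eq by (intro tendsto_add z L)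
    then show "\<phi> u = \<phi> (u @ [False]) + \<phi> (u @ [True])" using L[of u] LIMSEQ_unique by fastforce
  qed
  obtain \<nu> where \<nu>: "prob_space \<nu>" "sets \<nu> = sets Vinf" "\<And>u. measure \<nu> (cyl u) = \<phi> u"
    using exists_measure by blast
  show ?thesis
  proof (rule ex1I[where a = \<nu>])
    show "prob_space \<nu> \<and> sets \<nu> = sets Vinf \<and> (\<forall>u. (\<lambda>n. subtree_size (x n) u) \<longlonglongrightarrow> measure \<nu> (cyl u))"
      using \<nu> L by simp
  next
    fix \<mu> assume h: "prob_space \<mu> \<and> sets \<mu> = sets Vinf \<and> (\<forall>u. (\<lambda>n. subtree_size (x n) u) \<longlonglongrightarrow> measure \<mu> (cyl u))"
    show "\<mu> = \<nu>"
    proof (rule unique_measure)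
      show "prob_space \<mu>" "sets \<mu> = sets Vinf" using h by auto
      show "prob_space \<nu>" "sets \<nu> = sets Vinf" using \<nu> by auto
      show "measure \<mu> (cyl u) = measure \<nu> (cyl u)" for u
        using h L[of u] \<nu>(3)[of u] LIMSEQ_unique by metis
    qed
  qed
qed

theorem theorem1:
  shows "(\<forall>x :: nat \<Rightarrow> bool list set.
            (\<forall>n. binary_tree (x n) \<and> finite (x n) \<and> x n \<noteq> {}) \<longrightarrow>
            filterlim (\<lambda>n. card (x n)) at_top sequentially \<longrightarrow>
            (\<forall>u. convergent (\<lambda>n. subtree_size (x n) u)) \<longrightarrow>
            (\<exists>!\<mu>. prob_space \<mu> \<and> sets \<mu> = sets Vinf \<and>
                  (\<forall>u. (\<lambda>n. subtree_size (x n) u) \<longlonglongrightarrow> measure \<mu> (cyl u))))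
       \<and>
         (\<forall>(\<mu> :: (nat \<Rightarrow> bool) measure) (M :: 'a measure) (\<xi> :: nat \<Rightarrow> 'a \<Rightarrow> nat \<Rightarrow> bool).
            prob_space \<mu> \<longrightarrow> sets \<mu> = sets Vinf \<longrightarrow>
            prob_space M \<longrightarrow>
            prob_space.indep_vars M (\<lambda>_. Vinf) \<xi> UNIV \<longrightarrow>
            (\<forall>i. distr M Vinf (\<xi> i) = \<mu>) \<longrightarrow>
            (AE \<omega> in M. \<forall>u. (\<lambda>n. subtree_size (dst (\<lambda>i. \<xi> i \<omega>) n) u)
                                 \<longlonglongrightarrow> measure \<mu> (cyl u)))"
  using parta partb by blast

end
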